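(* Let $\mu$ be a partition of $n$ and consider its modified GP-tree. Every filling at Level 0 is a row-strict filling of $\mu$, and for each Level 0 filling $T$, $\Phi(T)$ equals the monomial labelling the Level B leaf below $T$.
   Context: Compositions: sequences of nonnegative integers summing to $n$, drawn with $\rho_k$ left-justified boxes in row $k$ (rows top to bottom). Row-strict filling: bijective placement of $1,\dots,n$ with entries increasing left to right in rows. Dimension-ordering of a composition with $r$ nonzero rows: label the far-right boxes of nonzero rows $1,\dots,r$, ordering them by column from rightmost to leftmost, and within a column top to bottom. Modified GP-tree of $\mu$: Level $n$ has the single vertex $\mu$ with no boxes filled. A vertex at Level $i$ ($1\le i\le n$) is $\mu$ with the values $i+1,\dots,n$ placed in some boxes, such that the unfilled boxes in each row form an initial (leftmost) segment, i.e. the unfilled boxes form a composition $\mu^{(i)}$ of $i$. If $\mu^{(i)}$ has $r$ nonzero rows, the vertex has $r$ children at Level $i-1$, joined by edges labelled $x_i^0,x_i^1,\dots,x_i^{r-1}$ (left to right); the child along edge $x_i^j$ is obtained by imposing the dimension-ordering on $\mu^{(i)}$ and placing the value $i$ into the unfilled box with label $j+1$. Level 0 thus consists of complete fillings of $\mu$; each Level 0 vertex has a unique child leaf at Level B joined by an edge labelled $1$, and each leaf is labelled by the product of all edge labels on the path from the root. Dimension pairs (with $h(j)=j$): $(a,b)$ is a dimension pair of a filling $T$ if $b>a$; $b$ lies in the same column as $a$ strictly below it or in a column strictly left of $a$'s; and if a box immediately right of $a$ contains $c$, then $b\le c$. $\Phi(T)=\prod_{j=2}^n x_j^{|D^T_j|}$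 where $D^T_j$ is the set of dimension pairs $(a,j)$. *)

theory Defs
  imports Main
begin

text \<open>A composition/partition is a list of row lengths, rows listed top to
bottom (row index 0 is the top row). Boxes are pairs (row, column), 0-indexed, columns
left to right. A (partial) filling is a function on pairs; the value 0 means "unfilled"
(and boxes outside the diagram are always 0). A monomial in the variables x_1, x_2, ...
is represented by its exponent vector of type nat => nat.\<close>

definition is_partition :: "nat list \<Rightarrow> nat \<Rightarrow> bool" where
  "is_partition \<mu> n \<longleftrightarrow> sorted_wrt (\<ge>) \<mu> \<and> (\<forall>p\<in>set \<mu>. 0 < p) \<and> sum_list \<mu> = n"

definition boxes :: "nat list \<Rightarrow> (nat \<times> nat) set" where
  "boxes \<mu> = {(r, c). r < length \<mu> \<and> c < \<mu> ! r}"

definition row_strict :: "nat list \<Rightarrow> nat \<Rightarrow> (nat \<times> nat \<Rightarrow> nat) \<Rightarrow> bool" where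
  "row_strict \<mu> n T \<longleftrightarrow> bij_betw T (boxes \<mu>) {1..n} \<and>
     (\<forall>r c. (r, c) \<in> boxes \<mu> \<longrightarrow> (r, Suc c) \<in> boxes \<mu> \<longrightarrow> T (r, c) < T (r, Suc c))"

definition unfilled_shape :: "nat list \<Rightarrow> (nat \<times> nat \<Rightarrow> nat) \<Rightarrow> nat list" where
  "unfilled_shape \<mu> T = map (\<lambda>k. card {c. c < \<mu> ! k \<and> T (k, c) = 0}) [0..<length \<mu>]"

text \<open>Dimension ordering of a composition \<rho>: the list of nonzero rows k (whose far-right
box lies in column \<rho>!k - 1), ordered by column from rightmost to leftmost and within a
column from top to bottom. The row at list position j carries label j+1.\<close>
definition dim_order :: "nat list \<Rightarrow> nat list" where
  "dim_order \<rho> = concat (map (\<lambda>c. filter (\<lambda>k. \<rho> ! k = Suc c) [0..<length \<rho>])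
                                (rev [0..<fold max \<rho> 0]))"

text \<open>Vertices of the modified GP-tree of \<mu>: gp_vertex \<mu> i T e means that there is a
vertex at Level i with (partial) filling T, reached from the root along a path whose
edge labels multiply to the monomial with exponent vector e.\<close>
inductive gp_vertex :: "nat list \<Rightarrow> nat \<Rightarrow> (nat \<times> nat \<Rightarrow> nat) \<Rightarrow> (nat \<Rightarrow> nat) \<Rightarrow> bool"
  for \<mu> :: "nat list" where
  root: "gp_vertex \<mu> (sum_list \<mu>) (\<lambda>_. 0) (\<lambda>_. 0)"
| step: "gp_vertex \<mu> (Suc i) T e \<Longrightarrow>
         j < length (dim_order (unfilled_shape \<mu> T)) \<Longrightarrow>
         k = dim_order (unfilled_shape \<mu> T) ! j \<Longrightarrow>
         gp_vertex \<mu> i (T((k, unfilled_shape \<mu> T ! k - 1) := Suc i)) (e(Suc i := j))"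

text \<open>Leaf at Level B below a Level 0 vertex: joined by an edge labelled 1, so its
label is the product of the edge labels on the path to the Level 0 vertex.\<close>
definition gp_leaf :: "nat list \<Rightarrow> (nat \<times> nat \<Rightarrow> nat) \<Rightarrow> (nat \<Rightarrow> nat) \<Rightarrow> bool" where
  "gp_leaf \<mu> T m \<longleftrightarrow> gp_vertex \<mu> 0 T m"

definition dim_pairs_with :: "nat list \<Rightarrow> (nat \<times> nat \<Rightarrow> nat) \<Rightarrow> nat \<Rightarrow> nat set" where
  "dim_pairs_with \<mu> T b = {a. \<exists>p\<in>boxes \<mu>. \<exists>q\<in>boxes \<mu>. T p = a \<and> T q = b \<and> a < b \<and>
       ((snd q = snd p \<and> fst p < fst q) \<or> snd q < snd p) \<and>
       ((fst p, Suc (snd p)) \<in> boxes \<mu> \<longrightarrow> b \<le> T (fst p, Suc (snd p)))}"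

definition Phi :: "nat list \<Rightarrow> nat \<Rightarrow> (nat \<times> nat \<Rightarrow> nat) \<Rightarrow> nat \<Rightarrow> nat" where
  "Phi \<mu> n T j = (if 2 \<le> j \<and> j \<le> n then card (dim_pairs_with \<mu> T j) else 0)"

end

theory Submission
  imports Defs
begin

definition Rel :: "nat list \<Rightarrow> nat \<Rightarrow> nat \<Rightarrow> bool" where
  "Rel u k k' \<longleftrightarrow> u!k' < u!k \<or> (u!k = u!k' \<and> k < k')"

lemma fold_max_ge: "a \<le> fold max xs (a::nat)" "x \<in> set xs \<Longrightarrow> x \<le> fold max xs a"
  by (induction xs arbitrary: a) (auto intro: order_trans[OF max.cobounded1] order_trans[OF max.cobounded2])

lemma sorted_concat_blocks:
  "sorted_wrt (>) cs \<Longrightarrow>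
   sorted_wrt (Rel u) (concat (map (\<lambda>c. filter (\<lambda>k. u ! k = Suc c) [0..<length u]) cs))"
proof (induction cs)
  case Nil then show ?case by simp
next
  case (Cons x xs)
  have s1: "sorted_wrt (Rel u) (filter (\<lambda>k. u ! k = Suc x) [0..<length u])"
    by (rule sorted_wrt_mono_rel[OF _ sorted_wrt_filter[OF sorted_wrt_upt]]) (auto simp: Rel_def)
  have "\<forall>a\<in>set (filter (\<lambda>k. u ! k = Suc x) [0..<length u]).
     \<forall>b\<in>set (concat (map (\<lambda>c. filter (\<lambda>k. u ! k = Suc c) [0..<length u]) xs)). Rel u a b"
    using Cons.prems by (auto simp: Rel_def)
  then show ?case using Cons s1 by (simp add: sorted_wrt_append)
qed

lemma dim_order_sorted: "sorted_wrt (Rel u) (dim_order u)"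
  unfolding dim_order_def
  by (rule sorted_concat_blocks) (simp add: sorted_wrt_rev)

lemma dim_order_set: "set (dim_order u) = {k. k < length u \<and> 0 < u ! k}"
proof -
  have "\<And>k. k < length u \<Longrightarrow> u!k \<le> fold max u 0"
    by (rule fold_max_ge(2)) simp
  then show ?thesis unfolding dim_order_def
    by (auto simp: gr0_conv_Suc) (metis Suc_le_lessD)
qed

lemma sorted_irrefl_distinct:
  "sorted_wrt R xs \<Longrightarrow> (\<And>x. \<not> R x x) \<Longrightarrow> distinct xs"
  by (induction xs) auto

lemma Rel_irrefl: "\<not> Rel u k k" by (auto simp: Rel_def)
lemma Rel_asym: "Rel u a b \<Longrightarrow> \<not> Rel u b a" by (auto simp: Rel_def)
lemma Rel_total: "a \<noteq> b \<Longrightarrow> Rel u a b \<or> Rel u b a" by (auto simp: Rel_def)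

lemma card_before:
  assumes "j < length (dim_order u)"
  shows "card {k \<in> set (dim_order u). Rel u k (dim_order u ! j)} = j"
proof -
  let ?d = "dim_order u"
  have s: "sorted_wrt (Rel u) ?d" by (rule dim_order_sorted)
  have dist: "distinct ?d" using sorted_irrefl_distinct[OF s] Rel_irrefl by blast
  have "{k \<in> set ?d. Rel u k (?d ! j)} = set (take j ?d)"
  proof (rule set_eqI, rule iffI)
    fix k assume "k \<in> {k \<in> set ?d. Rel u k (?d ! j)}"
    then obtain i where i: "i < length ?d" "?d ! i = k" and r: "Rel u k (?d ! j)"
      by (auto simp: in_set_conv_nth)
    have "i < j"
    proof (rule ccontr)
      assume "\<not> i < j"
      then consider "i = j" | "j < i" by linarith
      then show False
      proof cases
        case 1 then show ?thesis using r i Rel_irrefl by simp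
      next
        case 2 then have "Rel u (?d ! j) (?d ! i)" using s i by (auto simp: sorted_wrt_iff_nth_less)
        then show ?thesis using r i Rel_asym by simp
      qed
    qed
    then show "k \<in> set (take j ?d)" using i by (auto simp: in_set_conv_nth)
  next
    fix k assume "k \<in> set (take j ?d)"
    then obtain i where i: "i < j" "?d ! i = k" using assms
      by (auto simp: in_set_conv_nth)
    then have "Rel u k (?d ! j)" using s assms by (auto simp: sorted_wrt_iff_nth_less)
    moreover have "k \<in> set ?d" using i assms by auto
    ultimately show "k \<in> {k \<in> set ?d. Rel u k (?d ! j)}" by simp
  qed
  then show ?thesis using dist assms by (simp add: distinct_card)
qed

definition Pset :: "nat list \<Rightarrow> (nat \<times> nat \<Rightarrow> nat) \<Rightarrow> nat \<Rightarrow> (nat \<times> nat) set" where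
  "Pset \<mu> T b = {p \<in> boxes \<mu>. T p < b \<and>
     (\<exists>q\<in>boxes \<mu>. T q = b \<and> ((snd q = snd p \<and> fst p < fst q) \<or> snd q < snd p)) \<and>
     ((fst p, Suc (snd p)) \<in> boxes \<mu> \<longrightarrow> b \<le> T (fst p, Suc (snd p)))}"

definition Inv :: "nat list \<Rightarrow> nat \<Rightarrow> (nat \<times> nat \<Rightarrow> nat) \<Rightarrow> (nat \<Rightarrow> nat) \<Rightarrow> bool" where
  "Inv \<mu> i T e \<longleftrightarrow> i \<le> sum_list \<mu> \<and>
     (\<forall>p. T p \<noteq> 0 \<longrightarrow> p \<in> boxes \<mu>) \<and>
     (\<forall>k<length \<mu>. \<forall>c<\<mu>!k. (T (k,c) = 0) = (c < unfilled_shape \<mu> T ! k)) \<and>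
     (\<forall>k<length \<mu>. unfilled_shape \<mu> T ! k \<le> \<mu>!k) \<and>
     bij_betw T {p \<in> boxes \<mu>. T p \<noteq> 0} {Suc i..sum_list \<mu>} \<and>
     (\<forall>r c. (r,c) \<in> boxes \<mu> \<longrightarrow> (r, Suc c) \<in> boxes \<mu> \<longrightarrow> T (r,c) \<noteq> 0 \<longrightarrow> T (r,c) < T (r, Suc c)) \<and>
     (\<forall>b. e b = (if i < b \<and> b \<le> sum_list \<mu> then card (Pset \<mu> T b) else 0))"

lemma us_len: "length (unfilled_shape \<mu> T) = length \<mu>"
  by (simp add: unfilled_shape_def)

lemma us_nth: "k < length \<mu> \<Longrightarrow> unfilled_shape \<mu> T ! k = card {c. c < \<mu> ! k \<and> T (k, c) = 0}"
  by (simp add: unfilled_shape_def)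

lemma us_seg:
  assumes "l \<le> \<mu>!k" "k < length \<mu>" "\<forall>c<\<mu>!k. (T (k,c) = 0) = (c < l)"
  shows "unfilled_shape \<mu> T ! k = l"
proof -
  have "{c. c < \<mu> ! k \<and> T (k, c) = 0} = {..<l}" using assms by auto
  then show ?thesis using assms by (simp add: us_nth)
qed

lemma Inv_root: "Inv \<mu> (sum_list \<mu>) (\<lambda>_. 0) (\<lambda>_. 0)"
proof -
  have "\<forall>k<length \<mu>. unfilled_shape \<mu> (\<lambda>_. 0) ! k = \<mu>!k"
    by (auto intro: us_seg)
  then show ?thesis by (auto simp: Inv_def bij_betw_def)
qed

lemma Pset_upd:
  assumes "T p0 = 0" "v < b"
  shows "Pset \<mu> (T(p0 := v)) b = Pset \<mu> T b"
proof -
  have a: "\<And>x. ((T(p0 := v)) x < b) = (T x < b)" using assms by auto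
  have c: "\<And>x. ((T(p0 := v)) x = b) = (T x = b)" using assms by auto
  have d: "\<And>x. (b \<le> (T(p0 := v)) x) = (b \<le> T x)" using assms by auto
  show ?thesis unfolding Pset_def by (simp only: a c d)
qed

lemma Inv_step:
  assumes inv: "Inv \<mu> (Suc i) T e"
    and jl: "j < length (dim_order (unfilled_shape \<mu> T))"
    and kd: "k = dim_order (unfilled_shape \<mu> T) ! j"
  shows "Inv \<mu> i (T((k, unfilled_shape \<mu> T ! k - 1) := Suc i)) (e(Suc i := j))"
proof -
  define n where "n = sum_list \<mu>"
  define u where "u = unfilled_shape \<mu> T"
  define d where "d = dim_order u"
  define c0 where "c0 = u!k - 1"
  define p0 where "p0 = (k, c0)"
  define T' where "T' = T(p0 := Suc i)"
  have le: "Suc i \<le> n" and A: "\<forall>p. T p \<noteq> 0 \<longrightarrow> p \<in> boxes \<mu>"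
    and B: "\<forall>k<length \<mu>. \<forall>c<\<mu>!k. (T (k,c) = 0) = (c < u ! k)"
    and B2: "\<forall>k<length \<mu>. u ! k \<le> \<mu>!k"
    and C: "bij_betw T {p \<in> boxes \<mu>. T p \<noteq> 0} {Suc (Suc i)..n}"
    and D: "\<forall>r c. (r,c) \<in> boxes \<mu> \<longrightarrow> (r, Suc c) \<in> boxes \<mu> \<longrightarrow> T (r,c) \<noteq> 0 \<longrightarrow> T (r,c) < T (r, Suc c)"
    and E: "\<forall>b. e b = (if Suc i < b \<and> b \<le> n then card (Pset \<mu> T b) else 0)"
    using inv by (auto simp: Inv_def n_def u_def)
  have jl': "j < length d" using jl by (simp add: d_def u_def)
  have kin: "k \<in> set d" using jl' kd by (simp add: d_def u_def)
  then have kl: "k < length \<mu>" and upos: "0 < u!k"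
    using dim_order_set[of u] by (auto simp: d_def u_def us_len)
  have c0l: "c0 < u!k" using upos by (simp add: c0_def)
  have p0b: "p0 \<in> boxes \<mu>" using c0l B2 kl by (auto simp: p0_def boxes_def)
  have Tp0: "T p0 = 0" using B kl c0l B2 by (auto simp: p0_def)
  have filled: "\<And>q. T q \<noteq> 0 \<Longrightarrow> q \<in> boxes \<mu> \<and> Suc (Suc i) \<le> T q \<and> T q \<le> n"
  proof -
    fix q assume "T q \<noteq> 0"
    then have "q \<in> boxes \<mu>" using A by blast
    then have "T q \<in> {Suc (Suc i)..n}" using C \<open>T q \<noteq> 0\<close> by (auto simp: bij_betw_def)
    then show "q \<in> boxes \<mu> \<and> Suc (Suc i) \<le> T q \<and> T q \<le> n" using \<open>q \<in> boxes \<mu>\<close> by simp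
  qed
  define l where "l = (\<lambda>k'. if k' = k then c0 else u!k')"
  have segT': "\<forall>k'<length \<mu>. \<forall>c<\<mu>!k'. (T' (k',c) = 0) = (c < l k')"
    using B c0l kl by (auto simp: T'_def p0_def l_def c0_def)
  have lle: "\<forall>k'<length \<mu>. l k' \<le> \<mu>!k'" using B2 c0l by (auto simp: l_def)
  have u': "\<And>k'. k' < length \<mu> \<Longrightarrow> unfilled_shape \<mu> T' ! k' = l k'"
    using us_seg segT' lle by blast
  have F': "{p \<in> boxes \<mu>. T' p \<noteq> 0} = {p \<in> boxes \<mu>. T p \<noteq> 0} \<union> {p0}"
    using p0b Tp0 by (auto simp: T'_def)
  have I': "{Suc i..n} = {Suc (Suc i)..n} \<union> {T' p0}" using le by (auto simp: T'_def)
  have C0: "bij_betw T' {p \<in> boxes \<mu>. T p \<noteq> 0} {Suc (Suc i)..n}"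
  proof -
    have "\<And>x. x \<in> {p \<in> boxes \<mu>. T p \<noteq> 0} \<Longrightarrow> T x = T' x" using Tp0 by (auto simp: T'_def)
    then show ?thesis using C by (rule bij_betw_cong[THEN iffD1])
  qed
  have C': "bij_betw T' {p \<in> boxes \<mu>. T' p \<noteq> 0} {Suc i..n}"
  proof -
    have h1: "p0 \<notin> {p \<in> boxes \<mu>. T p \<noteq> 0}" using Tp0 by simp
    have h2: "T' p0 \<notin> {Suc (Suc i)..n}" by (simp add: T'_def)
    show ?thesis unfolding F' I' by (rule notIn_Un_bij_betw3[of p0 "{p \<in> boxes \<mu>. T p \<noteq> 0}" T' "{Suc (Suc i)..n}", OF h1 h2, THEN iffD1, OF C0])
  qed
  have D': "\<forall>r c. (r,c) \<in> boxes \<mu> \<longrightarrow> (r, Suc c) \<in> boxes \<mu> \<longrightarrow> T' (r,c) \<noteq> 0 \<longrightarrow> T' (r,c) < T' (r, Suc c)"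
  proof (intro allI impI)
    fix r c assume b1: "(r,c) \<in> boxes \<mu>" and b2: "(r, Suc c) \<in> boxes \<mu>" and nz: "T' (r,c) \<noteq> 0"
    show "T' (r,c) < T' (r, Suc c)"
    proof (cases "(r,c) = p0")
      case True
      then have rc: "r = k" "c = c0" by (auto simp: p0_def)
      have "Suc c = u!k" using rc c0l by (simp add: c0_def)
      then have "T (r, Suc c) \<noteq> 0" using B b2 rc kl by (auto simp: boxes_def)
      then have "Suc (Suc i) \<le> T (r, Suc c)" using filled by blast
      moreover have "(r, Suc c) \<noteq> p0" using rc by (simp add: p0_def)
      ultimately show ?thesis using True by (simp add: T'_def)
    next
      case False
      then have nz0: "T (r,c) \<noteq> 0" using nz by (simp add: T'_def)
      have "(r, Suc c) \<noteq> p0"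
      proof
        assume "(r, Suc c) = p0"
        then have "r = k" "Suc c = c0" by (auto simp: p0_def)
        then have "c < u!r" using c0l by simp
        moreover have "r < length \<mu>" "c < \<mu>!r" using b1 by (auto simp: boxes_def)
        ultimately have "T (r,c) = 0" using B by blast
        then show False using nz0 by simp
      qed
      then show ?thesis using False D b1 b2 nz0 by (simp add: T'_def)
    qed
  qed
  have core: "Pset \<mu> T' (Suc i) = (\<lambda>k'. (k', u!k' - 1)) ` {k' \<in> set d. Rel u k' k}"
  proof (rule set_eqI, rule iffI)
    fix p assume pP: "p \<in> Pset \<mu> T' (Suc i)"
    obtain r c where p: "p = (r,c)" by fastforce
    have pb: "(r,c) \<in> boxes \<mu>" and lt: "T' (r,c) < Suc i"
      and ex: "\<exists>q\<in>boxes \<mu>. T' q = Suc i \<and> ((snd q = c \<and> r < fst q) \<or> snd q < c)"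
      and rt: "(r, Suc c) \<in> boxes \<mu> \<longrightarrow> Suc i \<le> T' (r, Suc c)"
      using pP by (auto simp: Pset_def p)
    obtain q where qb: "q \<in> boxes \<mu>" and qv: "T' q = Suc i" and cc: "(snd q = c \<and> r < fst q) \<or> snd q < c"
      using ex by blast
    have "q = p0"
    proof (rule ccontr)
      assume "q \<noteq> p0"
      then have "T q = Suc i" using qv by (simp add: T'_def)
      then show False using filled[of q] by simp
    qed
    then have cc': "(c0 = c \<and> r < k) \<or> c0 < c" using cc by (simp add: p0_def)
    have rl: "r < length \<mu>" and cl: "c < \<mu>!r" using pb by (auto simp: boxes_def)
    have np0: "(r,c) \<noteq> p0" using cc' by (auto simp: p0_def)
    have T0: "T (r,c) = 0"
    proof (rule ccontr)
      assume "T (r,c) \<noteq> 0"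
      then have "Suc (Suc i) \<le> T (r,c)" using filled by blast
      then show False using lt np0 by (simp add: T'_def)
    qed
    then have cu: "c < u!r" using B rl cl by blast
    have ceq: "c = u!r - 1"
    proof (rule ccontr)
      assume "c \<noteq> u!r - 1"
      then have cs: "Suc c < u!r" using cu by linarith
      then have rb: "(r, Suc c) \<in> boxes \<mu>" using B2 rl by (auto simp: boxes_def)
      have "Suc c < \<mu>!r" using cs B2 rl less_le_trans by blast
      then have "T (r, Suc c) = 0" using B rl cs by blast
      then have "T' (r, Suc c) = 0 \<or> (r, Suc c) = p0" by (auto simp: T'_def)
      moreover have "(r, Suc c) \<noteq> p0" using cc' by (auto simp: p0_def)
      ultimately show False using rt rb by (simp add: T'_def)
    qed
    have rin: "r \<in> set d" using rl cu dim_order_set[of u] by (auto simp: d_def u_def us_len)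
    have "Rel u r k" using cc' ceq upos cu unfolding Rel_def c0_def by auto
    then show "p \<in> (\<lambda>k'. (k', u!k' - 1)) ` {k' \<in> set d. Rel u k' k}"
      using rin p ceq by auto
  next
    fix p assume "p \<in> (\<lambda>k'. (k', u!k' - 1)) ` {k' \<in> set d. Rel u k' k}"
    then obtain r where p: "p = (r, u!r - 1)" and rin: "r \<in> set d" and R: "Rel u r k" by auto
    have rl: "r < length \<mu>" and rpos: "0 < u!r" using rin dim_order_set[of u] by (auto simp: d_def u_def us_len)
    have rk: "r \<noteq> k" using R Rel_irrefl by blast
    have pb: "p \<in> boxes \<mu>" using rl rpos B2 p by (auto simp: boxes_def)
    have np0: "p \<noteq> p0" using rk p by (simp add: p0_def)
    have T0: "T p = 0" using B rl rpos B2 p by auto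
    have v1: "T' p < Suc i" using np0 T0 by (simp add: T'_def)
    have v2: "\<exists>q\<in>boxes \<mu>. T' q = Suc i \<and> ((snd q = snd p \<and> fst p < fst q) \<or> snd q < snd p)"
      using p0b R upos rpos by (intro bexI[of _ p0]) (auto simp: T'_def p0_def c0_def p Rel_def)
    have v3: "(fst p, Suc (snd p)) \<in> boxes \<mu> \<longrightarrow> Suc i \<le> T' (fst p, Suc (snd p))"
    proof
      assume rb: "(fst p, Suc (snd p)) \<in> boxes \<mu>"
      show "Suc i \<le> T' (fst p, Suc (snd p))"
      proof (cases "(fst p, Suc (snd p)) = p0")
        case True then show ?thesis by (simp add: T'_def)
      next
        case False
        have "T (r, u!r) \<noteq> 0" using B rl rb p rpos by (auto simp: boxes_def)
        then have "Suc (Suc i) \<le> T (r, u!r)" using filled by blast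
        then show ?thesis using False p rpos by (simp add: T'_def)
      qed
    qed
    show "p \<in> Pset \<mu> T' (Suc i)" using pb v1 v2 v3 unfolding Pset_def by blast
  qed
  have cardj: "card (Pset \<mu> T' (Suc i)) = j"
  proof -
    have "inj_on (\<lambda>k'. (k', u!k' - 1)) {k' \<in> set d. Rel u k' k}" by (auto simp: inj_on_def)
    then have "card (Pset \<mu> T' (Suc i)) = card {k' \<in> set d. Rel u k' k}"
      unfolding core by (rule card_image)
    also have "\<dots> = j" using card_before[of j u] jl' kd by (simp add: d_def u_def)
    finally show ?thesis .
  qed
  have E': "\<forall>b. (e(Suc i := j)) b = (if i < b \<and> b \<le> n then card (Pset \<mu> T' b) else 0)"
  proof
    fix b show "(e(Suc i := j)) b = (if i < b \<and> b \<le> n then card (Pset \<mu> T' b) else 0)"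
    proof (cases "b = Suc i")
      case True then show ?thesis using cardj le by simp
    next
      case False
      then have "Suc i < b \<Longrightarrow> Pset \<mu> T' b = Pset \<mu> T b"
        unfolding T'_def by (intro Pset_upd Tp0)
      then show ?thesis using E[rule_format, of b] False by (simp add: Suc_lessI)
    qed
  qed
  have A': "\<forall>p. T' p \<noteq> 0 \<longrightarrow> p \<in> boxes \<mu>" using A p0b by (auto simp: T'_def)
  have "Inv \<mu> i T' (e(Suc i := j))"
  proof -
    have s1: "\<forall>k<length \<mu>. \<forall>c<\<mu>!k. (T' (k,c) = 0) = (c < unfilled_shape \<mu> T' ! k)"
      using segT' u' by simp
    have s2: "\<forall>k<length \<mu>. unfilled_shape \<mu> T' ! k \<le> \<mu>!k" using lle u' by simp
    show ?thesis unfolding Inv_def n_def[symmetric]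
      using le A' s1 s2 C' D' E' by (intro conjI) auto
  qed
  then show ?thesis by (simp add: T'_def p0_def c0_def u_def)
qed

lemma gp_Inv: "gp_vertex \<mu> i T e \<Longrightarrow> Inv \<mu> i T e"
proof (induction rule: gp_vertex.induct)
  case root show ?case by (rule Inv_root)
next
  case (step i T e j k) then show ?case using Inv_step by blast
qed

lemma card_boxes: "card (boxes \<mu>) = sum_list \<mu>"
proof -
  have "boxes \<mu> = Sigma {..<length \<mu>} (\<lambda>r. {..<\<mu>!r})" by (auto simp: boxes_def)
  then have "card (boxes \<mu>) = (\<Sum>r<length \<mu>. \<mu>!r)" by simp
  also have "\<dots> = sum_list \<mu>" by (simp add: sum_list_sum_nth atLeast0LessThan)
  finally show ?thesis .
qed

lemma finite_boxes: "finite (boxes \<mu>)"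
proof -
  have "boxes \<mu> = Sigma {..<length \<mu>} (\<lambda>r. {..<\<mu>!r})" by (auto simp: boxes_def)
  then show ?thesis by simp
qed

lemma dp_image: "dim_pairs_with \<mu> T b = T ` Pset \<mu> T b"
proof (rule set_eqI)
  fix a
  show "a \<in> dim_pairs_with \<mu> T b \<longleftrightarrow> a \<in> T ` Pset \<mu> T b"
  proof
    assume "a \<in> dim_pairs_with \<mu> T b"
    then obtain p where p: "p \<in> boxes \<mu>" "T p = a" "a < b"
      "\<exists>q\<in>boxes \<mu>. T q = b \<and> ((snd q = snd p \<and> fst p < fst q) \<or> snd q < snd p)"
      "(fst p, Suc (snd p)) \<in> boxes \<mu> \<longrightarrow> b \<le> T (fst p, Suc (snd p))"
      unfolding dim_pairs_with_def mem_Collect_eq by blast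
    have "p \<in> Pset \<mu> T b" unfolding Pset_def mem_Collect_eq using p by simp
    then show "a \<in> T ` Pset \<mu> T b" using p(2) by (metis image_eqI)
  next
    assume "a \<in> T ` Pset \<mu> T b"
    then obtain p where p: "p \<in> Pset \<mu> T b" "a = T p" by (rule imageE)
    then have pq: "p \<in> boxes \<mu>" "T p < b"
      "\<exists>q\<in>boxes \<mu>. T q = b \<and> ((snd q = snd p \<and> fst p < fst q) \<or> snd q < snd p)"
      "(fst p, Suc (snd p)) \<in> boxes \<mu> \<longrightarrow> b \<le> T (fst p, Suc (snd p))"
      unfolding Pset_def mem_Collect_eq by simp_all
    show "a \<in> dim_pairs_with \<mu> T b" unfolding dim_pairs_with_def mem_Collect_eq
      using pq p(2) by blast
  qed
qed
lemma level0:
  assumes "Inv \<mu> 0 T e"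
  shows "row_strict \<mu> (sum_list \<mu>) T \<and> Phi \<mu> (sum_list \<mu>) T = e"
proof -
  define n where "n = sum_list \<mu>"
  have C: "bij_betw T {p \<in> boxes \<mu>. T p \<noteq> 0} {1..n}"
    and D: "\<forall>r c. (r,c) \<in> boxes \<mu> \<longrightarrow> (r, Suc c) \<in> boxes \<mu> \<longrightarrow> T (r,c) \<noteq> 0 \<longrightarrow> T (r,c) < T (r, Suc c)"
    and E: "\<forall>b. e b = (if 0 < b \<and> b \<le> n then card (Pset \<mu> T b) else 0)"
    using assms by (auto simp: Inv_def n_def)
  have "card {p \<in> boxes \<mu>. T p \<noteq> 0} = n" using C by (simp add: bij_betw_same_card)
  then have eq: "{p \<in> boxes \<mu>. T p \<noteq> 0} = boxes \<mu>"
    using card_subset_eq[OF finite_boxes, of "{p \<in> boxes \<mu>. T p \<noteq> 0}"] card_boxes[of \<mu>]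
    by (simp add: n_def)
  then have nz: "\<And>p. p \<in> boxes \<mu> \<Longrightarrow> T p \<noteq> 0" by blast
  have C': "bij_betw T (boxes \<mu>) {1..n}" using C eq by simp
  have rs: "row_strict \<mu> n T" unfolding row_strict_def using C' D nz by blast
  have inj: "inj_on T (boxes \<mu>)" using C' by (simp add: bij_betw_def)
  have "Phi \<mu> n T = e"
  proof
    fix b
    show "Phi \<mu> n T b = e b"
    proof (cases "2 \<le> b \<and> b \<le> n")
      case True
      have "dim_pairs_with \<mu> T b = T ` Pset \<mu> T b"
        by (rule dp_image)
      then have "card (dim_pairs_with \<mu> T b) = card (Pset \<mu> T b)"
        using inj by (simp add: card_image inj_on_subset[of T "boxes \<mu>"] Pset_def)
      then show ?thesis using True E by (simp add: Phi_def)
    next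
      case False
      have "b = 1 \<Longrightarrow> Pset \<mu> T b = {}" using nz by (auto simp: Pset_def)
      then show ?thesis using False E by (cases "b = 1") (auto simp: Phi_def)
    qed
  qed
  then show ?thesis using rs by (simp add: n_def)
qed

theorem mainTheorem6:
  fixes \<mu> :: "nat list" and n :: nat and T :: "nat \<times> nat \<Rightarrow> nat" and m :: "nat \<Rightarrow> nat"
  assumes "is_partition \<mu> n"
    and "gp_vertex \<mu> 0 T m"
  shows "row_strict \<mu> n T \<and> (\<forall>m'. gp_leaf \<mu> T m' \<longrightarrow> Phi \<mu> n T = m')"
proof -
  have n: "n = sum_list \<mu>" using assms(1) by (simp add: is_partition_def)
  have "row_strict \<mu> n T" using level0[OF gp_Inv[OF assms(2)]] n by simp
  moreover have "\<forall>m'. gp_leaf \<mu> T m' \<longrightarrow> Phi \<mu> n T = m'"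
    using level0[OF gp_Inv] n by (simp add: gp_leaf_def)
  ultimately show ?thesis by blast
qed

end
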